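(* Let $R$ be a ring and $x\in J(R)$, the Jacobson radical of $R$. Then $H^1_x(R)=0$ if and only if $x$ is nilpotent.
   Context: All rings are commutative with identity. $H^1_x(R)$ is the first cohomology of the complex $0\to R\to R_x\to0$ ($R$ in degree $0$, natural localization map), i.e. $H^1_x(R)=R_x/\operatorname{im}(R\to R_x)$. *)

theory Defs
  imports Main
begin

(* Ideals of a commutative ring (type class idiom, ring = UNIV of the type) *)
definition is_ideal :: "'a::comm_ring_1 set \<Rightarrow> bool" where
  "is_ideal I \<longleftrightarrow> 0 \<in> I \<and> (\<forall>a\<in>I. \<forall>b\<in>I. a + b \<in> I) \<and> (\<forall>a\<in>I. \<forall>r. r * a \<in> I)"

definition maximal_ideal :: "'a::comm_ring_1 set \<Rightarrow> bool" where
  "maximal_ideal I \<longleftrightarrow> is_ideal I \<and> I \<noteq> UNIV \<and>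
     (\<forall>J. is_ideal J \<and> I \<subseteq> J \<longrightarrow> J = I \<or> J = UNIV)"

definition jacobson_radical :: "'a::comm_ring_1 set" where
  "jacobson_radical = \<Inter>{I. maximal_ideal I}"

definition nilpotent :: "'a::comm_ring_1 \<Rightarrow> bool" where
  "nilpotent x \<longleftrightarrow> (\<exists>n. x ^ n = 0)"

(* Localization R_x: a pair (r, n) represents r / x^n *)
definition loc_rel :: "'a::comm_ring_1 \<Rightarrow> (('a \<times> nat) \<times> ('a \<times> nat)) set" where
  "loc_rel x = {((r, n), (s, m)). \<exists>k. x ^ k * (x ^ m * r - x ^ n * s) = 0}"

definition localization :: "'a::comm_ring_1 \<Rightarrow> ('a \<times> nat) set set" where
  "localization x = UNIV // loc_rel x"

definition loc_map :: "'a::comm_ring_1 \<Rightarrow> 'a \<Rightarrow> ('a \<times> nat) set" where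
  "loc_map x r = loc_rel x `` {(r, 0)}"

(* H^1_x(R) = R_x / im(R \<rightarrow> R_x): r/x^n and s/x^m are identified iff their
   difference r/x^n - s/x^m = (x^m r - x^n s)/x^(n+m) lies in the image of R,
   i.e. equals t/1 in R_x for some t. *)
definition h1_rel :: "'a::comm_ring_1 \<Rightarrow> (('a \<times> nat) \<times> ('a \<times> nat)) set" where
  "h1_rel x = {((r, n), (s, m)). \<exists>t. ((x ^ m * r - x ^ n * s, n + m), (t, 0)) \<in> loc_rel x}"

definition H1 :: "'a::comm_ring_1 \<Rightarrow> ('a \<times> nat) set set" where
  "H1 x = UNIV // h1_rel x"

definition H1_zero :: "'a::comm_ring_1 \<Rightarrow> ('a \<times> nat) set" where
  "H1_zero x = h1_rel x `` {(0, 0)}"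

end

theory Submission imports Defs begin
lemma krull:
  fixes a :: "'a::comm_ring_1"
  assumes na: "\<not> a dvd 1"
  shows "\<exists>M. maximal_ideal M \<and> a \<in> M"
proof -
  define S where "S = {I::'a set. is_ideal I \<and> a \<in> I \<and> 1 \<notin> I}"
  have "range (\<lambda>r. r * a) \<in> S"
    unfolding S_def is_ideal_def
  proof (intro CollectI conjI ballI allI)
    show "0 \<in> range (\<lambda>r. r * a)" by (rule range_eqI[of _ _ 0]) simp
    show "a \<in> range (\<lambda>r. r * a)" by (rule range_eqI[of _ _ 1]) simp
    show "1 \<notin> range (\<lambda>r. r * a)" using na by (auto simp: dvd_def mult.commute)
    fix u v assume "u \<in> range (\<lambda>r. r * a)" "v \<in> range (\<lambda>r. r * a)"
    then obtain p q where "u = p * a" "v = q * a" by auto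
    then show "u + v \<in> range (\<lambda>r. r * a)" by (intro range_eqI[of _ _ "p+q"]) (simp add: distrib_right)
  next
    fix u r assume "u \<in> range (\<lambda>r. r * a)"
    then obtain p where "u = p * a" by auto
    then show "r * u \<in> range (\<lambda>r. r * a)" by (intro range_eqI[of _ _ "r*p"]) (simp add: mult.assoc)
  qed
  hence ne: "S \<noteq> {}" by auto
  have "\<exists>M\<in>S. \<forall>X\<in>S. M \<subseteq> X \<longrightarrow> X = M"
  proof (rule subset_Zorn_nonempty[OF ne])
    fix C assume C: "C \<noteq> {}" "subset.chain S C"
    have CS: "C \<subseteq> S" and ch: "\<And>A B. A \<in> C \<Longrightarrow> B \<in> C \<Longrightarrow> A \<subseteq> B \<or> B \<subseteq> A"
      using C(2) unfolding subset.chain_def by auto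
    show "\<Union>C \<in> S" unfolding S_def is_ideal_def
    proof (intro CollectI conjI ballI allI)
      obtain I where I: "I \<in> C" using C(1) by auto
      then show "0 \<in> \<Union>C" using CS by (auto simp: S_def is_ideal_def)
      show "a \<in> \<Union>C" using I CS by (auto simp: S_def)
      show "1 \<notin> \<Union>C" using CS by (auto simp: S_def)
    next
      fix u v assume "u \<in> \<Union>C" "v \<in> \<Union>C"
      then obtain A B where AB: "A \<in> C" "B \<in> C" "u \<in> A" "v \<in> B" by auto
      show "u + v \<in> \<Union>C"
      proof (cases "A \<subseteq> B")
        case True
        have "is_ideal B" using AB CS by (auto simp: S_def)
        hence "u + v \<in> B" using True AB unfolding is_ideal_def by blast
        thus ?thesis using AB by blast
      next
        case False hence "B \<subseteq> A" using ch AB by auto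
        have "is_ideal A" using AB CS by (auto simp: S_def)
        hence "u + v \<in> A" using \<open>B \<subseteq> A\<close> AB unfolding is_ideal_def by blast
        thus ?thesis using AB by blast
      qed
    next
      fix u r assume "u \<in> \<Union>C"
      then obtain A where "A \<in> C" "u \<in> A" by auto
      thus "r * u \<in> \<Union>C" using CS by (auto simp: S_def is_ideal_def)
    qed
  qed
  then obtain M where M: "M \<in> S" "\<And>X. X \<in> S \<Longrightarrow> M \<subseteq> X \<Longrightarrow> X = M" by blast
  have "maximal_ideal M"
    unfolding maximal_ideal_def
  proof (intro conjI allI impI)
    show "is_ideal M" using M by (auto simp: S_def)
    show "M \<noteq> UNIV" using M by (auto simp: S_def)
    fix J assume J: "is_ideal J \<and> M \<subseteq> J"
    show "J = M \<or> J = UNIV"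
    proof (cases "1 \<in> J")
      case True
      have "r \<in> J" for r using J True unfolding is_ideal_def by (metis mult.right_neutral)
      hence "J = UNIV" by blast
      thus ?thesis ..
    next
      case False
      have "a \<in> J" using J M by (auto simp: S_def)
      hence "J \<in> S" using J False by (auto simp: S_def)
      thus ?thesis using M J by blast
    qed
  qed
  thus ?thesis using M by (auto simp: S_def)
qed
lemma jac_unit:
  fixes x :: "'a::comm_ring_1"
  assumes "x \<in> jacobson_radical"
  shows "(1 - x * t) dvd 1"
proof (rule ccontr)
  assume "\<not> (1 - x * t) dvd 1"
  then obtain M where M: "maximal_ideal M" "1 - x * t \<in> M" using krull by blast
  have I: "is_ideal M" using M(1) unfolding maximal_ideal_def by blast
  have "x \<in> M" using assms M(1) unfolding jacobson_radical_def by blast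
  hence "t * x \<in> M" using I unfolding is_ideal_def by blast
  hence "(1 - x * t) + t * x \<in> M" using I M(2) unfolding is_ideal_def by blast
  hence "1 \<in> M" by (simp add: mult.commute)
  have "r \<in> M" for r
  proof -
    have "r * 1 \<in> M" using \<open>1 \<in> M\<close> I unfolding is_ideal_def by blast
    thus ?thesis by simp
  qed
  hence "M = UNIV" by blast
  thus False using M(1) unfolding maximal_ideal_def by blast
qed

theorem lemma3p3:
  fixes x :: "'a::comm_ring_1"
  assumes "x \<in> jacobson_radical"
  shows "H1 x = {H1_zero x} \<longleftrightarrow> nilpotent x"
proof
  assume H: "H1 x = {H1_zero x}"
  have "h1_rel x `` {(1, 1)} \<in> H1 x" unfolding H1_def by (rule quotientI) simp
  hence eq: "h1_rel x `` {(1, 1)} = h1_rel x `` {(0, 0)}" using H by (simp add: H1_zero_def)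
  have "((0::'a, 0::nat), (0::'a, 0::nat)) \<in> h1_rel x"
    unfolding h1_rel_def loc_rel_def by (auto intro!: exI[of _ 0])
  hence "(0::'a, 0::nat) \<in> h1_rel x `` {(1, 1)}" using eq by auto
  hence "((1, 1), (0, 0)) \<in> h1_rel x" by auto
  then obtain t k where tk: "x ^ k * (1 - x * t) = 0"
    unfolding h1_rel_def loc_rel_def by auto
  obtain u where u: "1 = (1 - x * t) * u" using jac_unit[OF assms, of t] by (auto simp: dvd_def)
  have "x ^ k = x ^ k * ((1 - x * t) * u)" using u by simp
  also have "\<dots> = (x ^ k * (1 - x * t)) * u" by (simp only: mult.assoc)
  finally have "x ^ k = 0" using tk by simp
  thus "nilpotent x" unfolding nilpotent_def by blast
next
  assume "nilpotent x"
  then obtain N where N: "x ^ N = 0" unfolding nilpotent_def by blast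
  have "p \<in> h1_rel x" for p
  proof -
    obtain r n s m where p: "p = ((r, n), (s, m))" by (cases p) auto
    show ?thesis unfolding p
      unfolding h1_rel_def loc_rel_def using N by (auto intro!: exI[of _ 0] exI[of _ N])
  qed
  hence all: "h1_rel x = UNIV" by blast
  have "UNIV // (UNIV :: (('a \<times> nat) \<times> ('a \<times> nat)) set) = {UNIV}"
    unfolding quotient_def by auto
  moreover have "(UNIV :: (('a \<times> nat) \<times> ('a \<times> nat)) set) `` {(0, 0)} = UNIV" by blast
  ultimately show "H1 x = {H1_zero x}"
    unfolding H1_def H1_zero_def all by simp
qed

end
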